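(* Let $n\ge2$, $\kappa>0$, and let $\tilde\theta:\mathbb R\to[0,\infty)$ be locally Lipschitz and nondecreasing with $\tilde\theta(s)=0$ for $s\le 0$ and $\tilde\theta(s)>0$ for $s>0$; set $\theta(a,b)=\tilde\theta(\min(a,b))$. Let $\rho:[0,\infty)\to\mathbb R^n$ be the solution of $$\frac{d\rho_j}{dt}=\kappa\sum_{k=1}^n\theta(\rho_j,\rho_k)(\rho_j-\rho_k),\qquad j=1,\dots,n,$$ with $\rho(0)\in\mathcal P$. Let $\mathcal S_M=\{j\in\{1,\dots,n\}:\rho_j(0)=\max_{1\le k\le n}\rho_k(0)\}$ and $m=|\mathcal S_M|$. Then $$\lim_{t\to\infty}\rho_j(t)=\frac1m\ \ \forall j\in\mathcal S_M,\qquad \lim_{t\to\infty}\rho_k(t)=0\ \ \forall k\notin\mathcal S_M.$$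
   Context: $\mathcal P=\{\rho\in\mathbb R^n:\rho_i\ge0\ \forall i,\ \sum_{i=1}^n\rho_i=1\}$ denotes the probability simplex. *)

theory Defs
  imports "HOL-Analysis.Analysis"
begin

definition locally_lipschitz_real :: "(real \<Rightarrow> real) \<Rightarrow> bool" where
  "locally_lipschitz_real f \<longleftrightarrow>
     (\<forall>x. \<exists>e>0. \<exists>L. lipschitz_on L (cball x e) f)"

definition prob_simplex :: "(real ^ 'n) set" where
  "prob_simplex = {r. (\<forall>i. r $ i \<ge> 0) \<and> (\<Sum>i\<in>UNIV. r $ i) = 1}"

end

theory Submission
  imports Defs
begin


lemma incr:
  fixes f f' :: "real \<Rightarrow> real"
  assumes "a \<le> b" "continuous_on {a..b} f"
    "\<And>x. a<x \<Longrightarrow> x<b \<Longrightarrow> (f has_real_derivative f' x) (at x)"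
    "\<And>x. a<x \<Longrightarrow> x<b \<Longrightarrow> f' x \<ge> 0"
  shows "f a \<le> f b"
proof (rule DERIV_nonneg_imp_increasing_open[of a b f])
  show "a \<le> b" by (rule assms(1))
  show "continuous_on {a..b} f" by (rule assms(2))
  fix x assume "a < x" "x < b"
  then show "\<exists>y. (f has_real_derivative y) (at x) \<and> 0 \<le> y" using assms(3,4) by blast
qed

lemma exp_lin_deriv: "((\<lambda>x. exp(K*x)) has_real_derivative exp(K*x)*K) (at x)"
    by (rule derivative_eq_intros refl | simp)+
lemma sq_deriv:
  fixes d d' :: "real \<Rightarrow> real"
  assumes D: "(d has_real_derivative d' x) (at x)"
  shows "((\<lambda>x. exp(K*x)*(d x)^2) has_real_derivative
        exp(K*x) * K * (d x)^2 + exp(K*x) * (2 * d x * d' x)) (at x)"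
proof -
  have p: "((\<lambda>x. (d x)^2) has_real_derivative 2 * d x * d' x) (at x)"
    using DERIV_power[OF D, of 2] by (simp add: power2_eq_square mult.commute mult.left_commute)
  have "((\<lambda>x. exp(K*x)*(d x)^2) has_real_derivative exp(K*x)*K * (d x)^2 + 2 * d x * d' x * exp(K*x)) (at x)"
    using DERIV_mult[OF exp_lin_deriv p] .
  then show ?thesis by (simp add: mult.commute mult.left_commute)
qed

lemma gron:
  fixes d d' :: "real \<Rightarrow> real"
  assumes ab: "a \<le> b" and c: "continuous_on {a..b} d"
    and D: "\<And>x. a<x \<Longrightarrow> x<b \<Longrightarrow> (d has_real_derivative d' x) (at x)"
    and B: "\<And>x. a<x \<Longrightarrow> x<b \<Longrightarrow> \<bar>d' x\<bar> \<le> C * \<bar>d x\<bar>"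
  shows "exp(-2*C*b)*(d b)^2 \<le> exp(-2*C*a)*(d a)^2"
    and "exp(2*C*a)*(d a)^2 \<le> exp(2*C*b)*(d b)^2"
proof -
  have dd: "\<bar>d x * d' x\<bar> \<le> C * (d x)^2" if "a<x" "x<b" for x
  proof -
    have "\<bar>d x * d' x\<bar> = \<bar>d x\<bar> * \<bar>d' x\<bar>" by (simp add: abs_mult)
    also have "\<dots> \<le> \<bar>d x\<bar> * (C * \<bar>d x\<bar>)" using B[OF that] by (simp add: mult_left_mono)
    also have "\<dots> = C * (d x)^2" by (simp add: power2_eq_square)
    finally show ?thesis .
  qed
  have "(\<lambda>x. - (exp(-2*C*x)*(d x)^2)) a \<le> (\<lambda>x. - (exp(-2*C*x)*(d x)^2)) b"
  proof (rule incr[where f="\<lambda>x. - (exp(-2*C*x)*(d x)^2)" and f'="\<lambda>x. - (exp(-2*C*x) * (-2*C) * (d x)^2 + exp(-2*C*x) * (2 * d x * d' x))", OF ab])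
    show "continuous_on {a..b} (\<lambda>x. - (exp(-2*C*x)*(d x)^2))"
      by (intro continuous_intros c)
    fix x assume x: "a<x" "x<b"
    show "((\<lambda>x. - (exp(-2*C*x)*(d x)^2)) has_real_derivative
        - (exp(-2*C*x) * (-2*C) * (d x)^2 + exp(-2*C*x) * (2 * d x * d' x))) (at x)"
      using DERIV_minus[OF sq_deriv[where d=d and d'=d' and K="-2*C", OF D[OF x]]] .
    have h: "(d x * d' x) \<le> C * (d x)^2" using dd[OF x] by linarith
    have "0 \<le> exp(-2*C*x) * (2*(C * (d x)^2 - d x * d' x))"
      using h by (intro mult_nonneg_nonneg) auto
    then show "0 \<le> - (exp(-2*C*x) * (-2*C) * (d x)^2 + exp(-2*C*x) * (2 * d x * d' x))"
      by (simp add: algebra_simps)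
  qed
  then show "exp(-2*C*b)*(d b)^2 \<le> exp(-2*C*a)*(d a)^2" by simp
  show "exp(2*C*a)*(d a)^2 \<le> exp(2*C*b)*(d b)^2"
  proof (rule incr[where f="\<lambda>x. exp(2*C*x)*(d x)^2" and f'="\<lambda>x. (exp(2*C*x) * (2*C) * (d x)^2 + exp(2*C*x) * (2 * d x * d' x))", OF ab])
    show "continuous_on {a..b} (\<lambda>x. (exp(2*C*x)*(d x)^2))"
      by (intro continuous_intros c)
    fix x assume x: "a<x" "x<b"
    show "((\<lambda>x. (exp(2*C*x)*(d x)^2)) has_real_derivative
        (exp(2*C*x) * (2*C) * (d x)^2 + exp(2*C*x) * (2 * d x * d' x))) (at x)"
      using sq_deriv[where d=d and d'=d' and K="2*C", OF D[OF x]] .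
    have h: "- (d x * d' x) \<le> C * (d x)^2" using dd[OF x] by linarith
    have "0 \<le> exp(2*C*x) * (2*(C * (d x)^2 + d x * d' x))"
      using h by (intro mult_nonneg_nonneg) auto
    then show "0 \<le> (exp(2*C*x) * (2*C) * (d x)^2 + exp(2*C*x) * (2 * d x * d' x))"
      by (simp add: algebra_simps)
  qed
qed

lemma gron_sign:
  fixes d d' :: "real \<Rightarrow> real"
  assumes ab: "a \<le> b" and c: "continuous_on {a..b} d"
    and D: "\<And>x. a<x \<Longrightarrow> x<b \<Longrightarrow> (d has_real_derivative d' x) (at x)"
    and B: "\<And>x. a<x \<Longrightarrow> x<b \<Longrightarrow> \<bar>d' x\<bar> \<le> C * \<bar>d x\<bar>"
  shows "d a \<ge> 0 \<Longrightarrow> d b \<ge> 0" and "d a = 0 \<Longrightarrow> d b = 0"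
proof -
  show z: "d b = 0" if "d a = 0"
  proof -
    from gron(1)[OF assms] that have "exp(-2*C*b)*(d b)^2 \<le> 0" by simp
    moreover have "exp(-2*C*b)*(d b)^2 \<ge> 0" by simp
    ultimately show "d b = 0" by (simp add: mult_le_0_iff)
  qed
  have "d b > 0" if pos: "d a > 0"
  proof (rule ccontr)
    assume "\<not> d b > 0"
    then have "d b \<le> 0" by simp
    then obtain u where s: "a \<le> u" "u \<le> b" "d u = 0"
      using IVT2'[of d b 0 a, OF _ _ ab c] pos by auto
    have "exp(2*C*a)*(d a)^2 \<le> exp(2*C*u)*(d u)^2"
    proof (rule gron(2)[of a u d d' C])
      show "continuous_on {a..u} d" using c by (rule continuous_on_subset) (use s in auto)
      show "a \<le> u" by (rule s(1))
      fix x assume x: "a < x" "x < u"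
      then have x2: "a < x" "x < b" using s by auto
      show "(d has_real_derivative d' x) (at x)" by (rule D[OF x2])
      show "\<bar>d' x\<bar> \<le> C * \<bar>d x\<bar>" by (rule B[OF x2])
    qed
    with s pos show False by (simp add: mult_le_0_iff)
  qed
  then show "d b \<ge> 0" if "d a \<ge> 0"
  proof (cases "d a = 0")
    case True then show ?thesis using z by simp
  next
    case False then show ?thesis using that \<open>d a > 0 \<Longrightarrow> d b > 0\<close> by simp
  qed
qed


definition gg :: "(real \<Rightarrow> real) \<Rightarrow> real \<Rightarrow> real \<Rightarrow> real" where
  "gg th x y = th (min x y) * (x - y)"

lemma gg_antisym: "gg th x y = - gg th y x"
  by (simp add: gg_def min.commute algebra_simps)

lemma glip:
  fixes th :: "real \<Rightarrow> real"
  assumes mono: "mono th" and nn: "\<And>s. th s \<ge> 0" and L: "L-lipschitz_on {-B..B} th"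
    and x: "x \<in> {-B..B}" and x': "x' \<in> {-B..B}" and y: "y \<in> {-B..B}"
  shows "\<bar>gg th x y - gg th x' y\<bar> \<le> (th B + 2*B*L) * \<bar>x - x'\<bar>"
proof -
  have eq: "gg th x y - gg th x' y = th (min x y) * (x - x') + (th (min x y) - th (min x' y)) * (x' - y)"
    by (simp add: gg_def algebra_simps)
  have L0: "L \<ge> 0" using L by (rule lipschitz_on_nonneg)
  have t1: "\<bar>th (min x y)\<bar> \<le> th B"
  proof -
    have "min x y \<le> B" using x by auto
    then have "th (min x y) \<le> th B" using mono by (simp add: monoD)
    then show ?thesis using nn[of "min x y"] by simp
  qed
  have mx: "min x y \<in> {-B..B}" "min x' y \<in> {-B..B}" using x x' y by auto
  have t2: "\<bar>th (min x y) - th (min x' y)\<bar> \<le> L * \<bar>x - x'\<bar>"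
  proof -
    have "dist (th (min x y)) (th (min x' y)) \<le> L * dist (min x y) (min x' y)"
      by (rule lipschitz_onD[OF L mx])
    moreover have "\<bar>min x y - min x' y\<bar> \<le> \<bar>x - x'\<bar>" by (cases "x \<le> y"; cases "x' \<le> y") (auto simp: min_def)
    ultimately show ?thesis using L0 unfolding dist_real_def
      by (meson mult_left_mono order_trans)
  qed
  have t3: "\<bar>x' - y\<bar> \<le> 2*B" using x' y by (simp add: abs_le_iff)
  have "\<bar>gg th x y - gg th x' y\<bar> \<le> \<bar>th (min x y)\<bar> * \<bar>x - x'\<bar> + \<bar>th (min x y) - th (min x' y)\<bar> * \<bar>x' - y\<bar>"
    unfolding eq abs_mult[symmetric] by (rule abs_triangle_ineq)
  also have "\<dots> \<le> th B * \<bar>x - x'\<bar> + (L * \<bar>x - x'\<bar>) * (2*B)"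
  proof (rule add_mono)
    show "\<bar>th (min x y)\<bar> * \<bar>x - x'\<bar> \<le> th B * \<bar>x - x'\<bar>" using t1 by (simp add: mult_right_mono)
    show "\<bar>th (min x y) - th (min x' y)\<bar> * \<bar>x' - y\<bar> \<le> (L * \<bar>x - x'\<bar>) * (2*B)"
      by (rule mult_mono[OF t2 t3]) (use L0 in auto)
  qed
  also have "\<dots> = (th B + 2*B*L) * \<bar>x - x'\<bar>" by (simp add: algebra_simps)
  finally show ?thesis .
qed

lemma gap_term:
  fixes th :: "real \<Rightarrow> real"
  assumes mono: "mono th" and nn: "\<And>s. th s \<ge> 0" and "y \<le> x" "z \<le> x"
  shows "gg th z y \<le> gg th x y"
proof (cases "y \<le> z")
  case True
  have m1: "min x y = y" "min z y = y" using True assms by auto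
  have "gg th x y - gg th z y = th y * (x - z)" by (simp add: gg_def m1 algebra_simps)
  also have "\<dots> \<ge> 0" using nn[of y] assms by simp
  finally show ?thesis by simp
next
  case False
  have m1: "min x y = y" "min z y = z" using False assms by auto
  have "gg th x y - gg th z y = th y * (x - y) + th z * (y - z)" by (simp add: gg_def m1 algebra_simps)
  also have "\<dots> \<ge> 0" using nn[of y] nn[of z] assms False by simp
  finally show ?thesis by simp
qed

lemma gg_nonneg:
  assumes "\<And>s. th s \<ge> 0" "y \<le> x" shows "gg th x y \<ge> 0"
  using assms by (simp add: gg_def)



locale sys =
  fixes \<kappa> :: real and \<theta>t :: "real \<Rightarrow> real" and \<rho> :: "real \<Rightarrow> real ^ ('n::finite)"
  assumes kpos: "\<kappa> > 0"
    and th_nonneg: "\<And>s. \<theta>t s \<ge> 0"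
    and th_lip: "locally_lipschitz_real \<theta>t"
    and th_mono: "mono \<theta>t"
    and th_zero: "\<And>s. s \<le> 0 \<Longrightarrow> \<theta>t s = 0"
    and th_pos: "\<And>s. s > 0 \<Longrightarrow> \<theta>t s > 0"
    and ode: "\<And>t. t \<ge> 0 \<Longrightarrow>
       (\<rho> has_vector_derivative
          (\<chi> j. \<kappa> * (\<Sum>k\<in>UNIV. \<theta>t (min (\<rho> t $ j) (\<rho> t $ k)) * (\<rho> t $ j - \<rho> t $ k))))
       (at t within {0..})"
    and init: "\<rho> 0 \<in> prob_simplex"
begin

definition F :: "real \<Rightarrow> 'n \<Rightarrow> real" where
  "F t j = \<kappa> * (\<Sum>k\<in>UNIV. gg \<theta>t (\<rho> t $ j) (\<rho> t $ k))"

lemma comp_deriv_within: "t \<ge> 0 \<Longrightarrow> ((\<lambda>s. \<rho> s $ j) has_real_derivative F t j) (at t within {0..})"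
proof -
  assume t: "t \<ge> 0"
  have "((\<lambda>s. \<rho> s $ j) has_vector_derivative
          (\<chi> j. \<kappa> * (\<Sum>k\<in>UNIV. \<theta>t (min (\<rho> t $ j) (\<rho> t $ k)) * (\<rho> t $ j - \<rho> t $ k))) $ j)
       (at t within {0..})"
    by (rule bounded_linear.has_vector_derivative[OF bounded_linear_vec_nth ode[OF t]])
  then show ?thesis unfolding has_real_derivative_iff_has_vector_derivative F_def gg_def by simp
qed

lemma comp_deriv: "t > 0 \<Longrightarrow> ((\<lambda>s. \<rho> s $ j) has_real_derivative F t j) (at t)"
proof -
  assume t: "t > 0"
  have "((\<lambda>s. \<rho> s $ j) has_real_derivative F t j) (at t within {0<..})"
  proof (rule DERIV_subset[OF comp_deriv_within[of t j]])
    show "0 \<le> t" using t by simp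
    show "{0<..} \<subseteq> {0::real..}" by auto
  qed
  moreover have "at t within {0<..} = at t" by (rule at_within_open) (use t in auto)
  ultimately show ?thesis by simp
qed

lemma comp_cont: "continuous_on {0..} (\<lambda>s. \<rho> s $ j)"
  unfolding continuous_on_eq_continuous_within
proof
  fix t :: real assume "t \<in> {0..}"
  then show "continuous (at t within {0..}) (\<lambda>s. \<rho> s $ j)"
    using DERIV_continuous[OF comp_deriv_within[of t j]] by simp
qed

lemma comp_cont_ab: "0 \<le> a \<Longrightarrow> continuous_on {a..b} (\<lambda>s. \<rho> s $ j)"
  by (rule continuous_on_subset[OF comp_cont]) auto

lemma vec_cont: "continuous_on {0..} \<rho>"
  unfolding continuous_on_eq_continuous_within
proof
  fix t :: real assume "t \<in> {0..}"
  then show "continuous (at t within {0..}) \<rho>"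
    using has_vector_derivative_continuous[OF ode[of t]] by simp
qed

lemma bound_B: obtains B where "B \<ge> 0" "\<And>t i. t \<in> {0..T} \<Longrightarrow> \<bar>\<rho> t $ i\<bar> \<le> B"
proof -
  have "compact (\<rho> ` {0..T})"
    by (rule compact_continuous_image[OF continuous_on_subset[OF vec_cont]]) auto
  then have "bounded (\<rho> ` {0..T})" by (rule compact_imp_bounded)
  then obtain B where B: "B > 0" "\<And>x. x \<in> \<rho> ` {0..T} \<Longrightarrow> norm x \<le> B"
    unfolding bounded_pos by blast
  show ?thesis
  proof (rule that[of B])
    show "B \<ge> 0" using B by simp
    fix t i assume "t \<in> {0..T}"
    then have "norm (\<rho> t) \<le> B" using B by blast
    then show "\<bar>\<rho> t $ i\<bar> \<le> B" using component_le_norm_cart[of "\<rho> t" i] by linarith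
  qed
qed

lemma lip_B: obtains L where "L-lipschitz_on {-B..B} \<theta>t"
proof -
  have ll: "local_lipschitz {0::real} {-B..B} (\<lambda>_. \<theta>t)"
    unfolding local_lipschitz_def
  proof (intro ballI)
    fix x t assume "x \<in> {-B..B}" "t \<in> {0::real}"
    obtain e L where e: "e > 0" "L-lipschitz_on (cball x e) \<theta>t"
      using th_lip unfolding locally_lipschitz_real_def by blast
    have "\<forall>t\<in>cball t e \<inter> {0}. L-lipschitz_on (cball x e \<inter> {-B..B}) ((\<lambda>_. \<theta>t) t)"
      using lipschitz_on_subset[OF e(2)] by auto
    then show "\<exists>u>0. \<exists>L. \<forall>t\<in>cball t u \<inter> {0}. L-lipschitz_on (cball x u \<inter> {-B..B}) ((\<lambda>_. \<theta>t) t)"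
      using e(1) by blast
  qed
  obtain L where "\<And>t. t \<in> {0::real} \<Longrightarrow> L-lipschitz_on {-B..B} ((\<lambda>_. \<theta>t) t)"
    by (rule local_lipschitz_compact_implies_lipschitz[OF ll]) auto
  then show ?thesis using that by auto
qed

lemma gg_zero: "gg \<theta>t 0 y = 0"
  by (simp add: gg_def th_zero)

lemma Cbound: obtains C where "C \<ge> 0"
  "\<And>t j k. t \<in> {0..T} \<Longrightarrow> \<bar>F t j - F t k\<bar> \<le> C * \<bar>\<rho> t $ j - \<rho> t $ k\<bar>"
  "\<And>t j. t \<in> {0..T} \<Longrightarrow> \<bar>F t j\<bar> \<le> C * \<bar>\<rho> t $ j\<bar>"
proof -
  obtain B where B: "B \<ge> 0" "\<And>t i. t \<in> {0..T} \<Longrightarrow> \<bar>\<rho> t $ i\<bar> \<le> B" by (rule bound_B[where T=T]) blast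
  obtain L where L: "L-lipschitz_on {-B..B} \<theta>t" by (rule lip_B)
  define C0 where "C0 = \<theta>t B + 2*B*L"
  have C0: "C0 \<ge> 0" unfolding C0_def using th_nonneg[of B] B(1) lipschitz_on_nonneg[OF L] by simp
  define C where "C = \<kappa> * real CARD('n) * C0"
  have C: "C \<ge> 0" unfolding C_def using C0 kpos by simp
  have key: "\<bar>\<kappa> * (\<Sum>l\<in>UNIV. gg \<theta>t x (\<rho> t $ l)) - \<kappa> * (\<Sum>l\<in>UNIV. gg \<theta>t x' (\<rho> t $ l))\<bar> \<le> C * \<bar>x - x'\<bar>"
    if t: "t \<in> {0..T}" and x: "x \<in> {-B..B}" and x': "x' \<in> {-B..B}" for t x x'
  proof -
    have "\<bar>\<kappa> * (\<Sum>l\<in>UNIV. gg \<theta>t x (\<rho> t $ l)) - \<kappa> * (\<Sum>l\<in>UNIV. gg \<theta>t x' (\<rho> t $ l))\<bar>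
        = \<kappa> * \<bar>\<Sum>l\<in>UNIV. gg \<theta>t x (\<rho> t $ l) - gg \<theta>t x' (\<rho> t $ l)\<bar>"
      using kpos by (simp add: sum_subtractf right_diff_distrib[symmetric] abs_mult)
    also have "\<dots> \<le> \<kappa> * (\<Sum>l\<in>UNIV. \<bar>gg \<theta>t x (\<rho> t $ l) - gg \<theta>t x' (\<rho> t $ l)\<bar>)"
      using kpos by (intro mult_left_mono sum_abs) auto
    also have "\<dots> \<le> \<kappa> * (\<Sum>l\<in>(UNIV::'n set). C0 * \<bar>x - x'\<bar>)"
    proof (intro mult_left_mono sum_mono)
      fix l :: 'n
      have y: "\<rho> t $ l \<in> {-B..B}" using B(2)[OF t, of l] by (simp add: abs_le_iff)
      show "\<bar>gg \<theta>t x (\<rho> t $ l) - gg \<theta>t x' (\<rho> t $ l)\<bar> \<le> C0 * \<bar>x - x'\<bar>"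
        unfolding C0_def by (rule glip[OF th_mono th_nonneg L x x' y])
    qed (use kpos in auto)
    also have "\<dots> = C * \<bar>x - x'\<bar>" by (simp add: C_def)
    finally show ?thesis .
  qed
  show ?thesis
  proof (rule that[OF C])
    fix t j k assume t: "t \<in> {0..T}"
    have "\<rho> t $ j \<in> {-B..B}" "\<rho> t $ k \<in> {-B..B}" using B(2)[OF t, of j] B(2)[OF t, of k] by (auto simp: abs_le_iff)
    from key[OF t this] show "\<bar>F t j - F t k\<bar> \<le> C * \<bar>\<rho> t $ j - \<rho> t $ k\<bar>" by (simp add: F_def)
  next
    fix t j assume t: "t \<in> {0..T}"
    have "\<rho> t $ j \<in> {-B..B}" "0 \<in> {-B..B}" using B(2)[OF t, of j] B(1) by (auto simp: abs_le_iff)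
    from key[OF t this] show "\<bar>F t j\<bar> \<le> C * \<bar>\<rho> t $ j\<bar>" by (simp add: F_def gg_zero)
  qed
qed

lemma sign_pres:
  fixes d :: "real \<Rightarrow> real" and d' :: "real \<Rightarrow> real"
  assumes t: "0 \<le> t"
    and dc: "continuous_on {0..t} d"
    and dD: "\<And>x. 0 < x \<Longrightarrow> (d has_real_derivative d' x) (at x)"
    and dB: "\<And>C x. (\<And>s j k. s \<in> {0..t} \<Longrightarrow> \<bar>F s j - F s k\<bar> \<le> C * \<bar>\<rho> s $ j - \<rho> s $ k\<bar>) \<Longrightarrow>
               (\<And>s j. s \<in> {0..t} \<Longrightarrow> \<bar>F s j\<bar> \<le> C * \<bar>\<rho> s $ j\<bar>) \<Longrightarrow> x \<in> {0..t} \<Longrightarrow>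
               \<bar>d' x\<bar> \<le> C * \<bar>d x\<bar>"
  shows "d 0 \<ge> 0 \<Longrightarrow> d t \<ge> 0" and "d 0 = 0 \<Longrightarrow> d t = 0"
proof -
  obtain C where C: "C \<ge> 0"
    "\<And>s j k. s \<in> {0..t} \<Longrightarrow> \<bar>F s j - F s k\<bar> \<le> C * \<bar>\<rho> s $ j - \<rho> s $ k\<bar>"
    "\<And>s j. s \<in> {0..t} \<Longrightarrow> \<bar>F s j\<bar> \<le> C * \<bar>\<rho> s $ j\<bar>"
    by (rule Cbound[where T=t]) blast+
  have D: "\<And>x. 0<x \<Longrightarrow> x<t \<Longrightarrow> (d has_real_derivative d' x) (at x)" using dD by blast
  have Bd: "\<And>x. 0<x \<Longrightarrow> x<t \<Longrightarrow> \<bar>d' x\<bar> \<le> C * \<bar>d x\<bar>"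
  proof -
    fix x :: real assume "0 < x" "x < t"
    then have "x \<in> {0..t}" by simp
    then show "\<bar>d' x\<bar> \<le> C * \<bar>d x\<bar>" using dB[of C x] C(2) C(3) by blast
  qed
  show "d 0 \<ge> 0 \<Longrightarrow> d t \<ge> 0" by (rule gron_sign(1)[OF t dc D Bd])
  show "d 0 = 0 \<Longrightarrow> d t = 0" by (rule gron_sign(2)[OF t dc D Bd])
qed

lemma pair_pres:
  assumes t: "0 \<le> t"
  shows "\<rho> 0 $ k \<le> \<rho> 0 $ j \<Longrightarrow> \<rho> t $ k \<le> \<rho> t $ j"
    and "\<rho> 0 $ k = \<rho> 0 $ j \<Longrightarrow> \<rho> t $ k = \<rho> t $ j"
proof -
  let ?d = "\<lambda>s. \<rho> s $ j - \<rho> s $ k"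
  let ?d' = "\<lambda>s. F s j - F s k"
  have dc: "continuous_on {0..t} ?d"
    by (intro continuous_on_diff comp_cont_ab) simp_all
  have dD: "(?d has_real_derivative ?d' x) (at x)" if "0 < x" for x
    by (rule DERIV_diff[OF comp_deriv[OF that] comp_deriv[OF that]])
  have dB: "\<bar>?d' x\<bar> \<le> C * \<bar>?d x\<bar>"
    if "\<And>s j k. s \<in> {0..t} \<Longrightarrow> \<bar>F s j - F s k\<bar> \<le> C * \<bar>\<rho> s $ j - \<rho> s $ k\<bar>" "x \<in> {0..t}" for C x
    using that by blast
  note sp = sign_pres[of t ?d ?d', OF t dc dD dB]
  show "\<rho> 0 $ k \<le> \<rho> 0 $ j \<Longrightarrow> \<rho> t $ k \<le> \<rho> t $ j" using sp(1) by simp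
  show "\<rho> 0 $ k = \<rho> 0 $ j \<Longrightarrow> \<rho> t $ k = \<rho> t $ j" using sp(2) by simp
qed

lemma init_nonneg: "\<rho> 0 $ j \<ge> 0" using init unfolding prob_simplex_def by simp
lemma init_sum: "(\<Sum>j\<in>UNIV. \<rho> 0 $ j) = 1" using init unfolding prob_simplex_def by simp

lemma nonneg:
  assumes t: "0 \<le> t" shows "\<rho> t $ j \<ge> 0"
proof -
  let ?d = "\<lambda>s. \<rho> s $ j"
  let ?d' = "\<lambda>s. F s j"
  have dc: "continuous_on {0..t} ?d" by (rule comp_cont_ab) simp
  have dD: "(?d has_real_derivative ?d' x) (at x)" if "0 < x" for x
    by (rule comp_deriv[OF that])
  have dB: "\<bar>?d' x\<bar> \<le> C * \<bar>?d x\<bar>"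
    if "\<And>s j. s \<in> {0..t} \<Longrightarrow> \<bar>F s j\<bar> \<le> C * \<bar>\<rho> s $ j\<bar>" "x \<in> {0..t}" for C x
    using that by blast
  note sp = sign_pres[of t ?d ?d', OF t dc dD dB]
  show ?thesis using sp(1) init_nonneg[of j] by simp
qed

lemma Fsum: "(\<Sum>j\<in>UNIV. F t j) = 0"
proof -
  define S where "S = (\<Sum>j\<in>(UNIV::'n set). \<Sum>k\<in>UNIV. gg \<theta>t (\<rho> t $ j) (\<rho> t $ k))"
  have "S = (\<Sum>k\<in>(UNIV::'n set). \<Sum>j\<in>UNIV. gg \<theta>t (\<rho> t $ j) (\<rho> t $ k))"
    unfolding S_def by (rule sum.swap)
  also have "\<dots> = (\<Sum>k\<in>(UNIV::'n set). \<Sum>j\<in>UNIV. - gg \<theta>t (\<rho> t $ k) (\<rho> t $ j))"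
    by (subst gg_antisym) (rule refl)
  also have "\<dots> = - S" unfolding S_def by (simp add: sum_negf)
  finally have "S = 0" by simp
  then show ?thesis unfolding F_def S_def by (simp add: sum_distrib_left[symmetric])
qed

lemma sum1: assumes t: "0 \<le> t" shows "(\<Sum>j\<in>UNIV. \<rho> t $ j) = 1"
proof -
  let ?f = "\<lambda>s. \<Sum>j\<in>UNIV. \<rho> s $ j"
  have c: "continuous_on {0..t} ?f" by (intro continuous_on_sum comp_cont_ab) simp
  have D: "(?f has_real_derivative (\<Sum>j\<in>UNIV. F x j)) (at x)" if "0 < x" for x
    by (rule DERIV_sum) (rule comp_deriv[OF that])
  have "?f 0 \<le> ?f t"
    by (rule incr[where f="?f" and f'="\<lambda>x. \<Sum>j\<in>UNIV. F x j", OF t c D]) (simp_all add: Fsum)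
  moreover have "(\<lambda>s. - ?f s) 0 \<le> (\<lambda>s. - ?f s) t"
  proof (rule incr[where f="\<lambda>s. - ?f s" and f'="\<lambda>x. - (\<Sum>j\<in>UNIV. F x j)", OF t])
    show "continuous_on {0..t} (\<lambda>s. - ?f s)" using c by (rule continuous_on_minus)
    fix x :: real assume "0 < x" "x < t"
    then show "((\<lambda>s. - ?f s) has_real_derivative - (\<Sum>j\<in>UNIV. F x j)) (at x)"
      using DERIV_minus[OF D] by simp
    show "0 \<le> - (\<Sum>j\<in>UNIV. F x j)" by (simp add: Fsum)
  qed
  ultimately show ?thesis using init_sum by simp
qed

lemma le1: assumes t: "0 \<le> t" shows "\<rho> t $ j \<le> 1"
proof -
  have "\<rho> t $ j \<le> (\<Sum>i\<in>UNIV. \<rho> t $ i)"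
    by (rule member_le_sum) (use nonneg[OF t] in auto)
  then show ?thesis using sum1[OF t] by simp
qed

context
  fixes M :: 'n
  assumes Mmax: "\<And>l. \<rho> 0 $ l \<le> \<rho> 0 $ M"
begin

lemma le_M: "0 \<le> t \<Longrightarrow> \<rho> t $ l \<le> \<rho> t $ M"
  using pair_pres(1)[OF _ Mmax] by blast

lemma FM_nonneg: "0 \<le> t \<Longrightarrow> F t M \<ge> 0"
  unfolding F_def using kpos
  by (intro mult_nonneg_nonneg sum_nonneg gg_nonneg[OF th_nonneg] le_M) auto

lemma M_mono: assumes s: "0 \<le> s" "s \<le> t" shows "\<rho> s $ M \<le> \<rho> t $ M"
proof (rule incr[where f="\<lambda>x. \<rho> x $ M" and f'="\<lambda>x. F x M", OF s(2)])
  show "continuous_on {s..t} (\<lambda>x. \<rho> x $ M)" by (rule comp_cont_ab[OF s(1)])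
  fix x assume x: "s < x" "x < t"
  then show "((\<lambda>x. \<rho> x $ M) has_real_derivative F x M) (at x)" using s by (intro comp_deriv) simp
  show "0 \<le> F x M" using x s by (intro FM_nonneg) simp
qed

lemma gap_mono: assumes s: "0 \<le> s" "s \<le> t"
  shows "\<rho> s $ M - \<rho> s $ k \<le> \<rho> t $ M - \<rho> t $ k"
proof (rule incr[where f="\<lambda>x. \<rho> x $ M - \<rho> x $ k" and f'="\<lambda>x. F x M - F x k", OF s(2)])
  show "continuous_on {s..t} (\<lambda>x. \<rho> x $ M - \<rho> x $ k)"
    by (intro continuous_on_diff comp_cont_ab[OF s(1)])
  fix x assume x: "s < x" "x < t"
  then have x0: "0 < x" using s by simp
  show "((\<lambda>x. \<rho> x $ M - \<rho> x $ k) has_real_derivative F x M - F x k) (at x)"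
    by (rule DERIV_diff[OF comp_deriv[OF x0] comp_deriv[OF x0]])
  have "F x M - F x k = \<kappa> * (\<Sum>l\<in>UNIV. gg \<theta>t (\<rho> x $ M) (\<rho> x $ l) - gg \<theta>t (\<rho> x $ k) (\<rho> x $ l))"
    unfolding F_def by (simp add: sum_subtractf right_diff_distrib)
  also have "\<dots> \<ge> 0"
  proof (intro mult_nonneg_nonneg sum_nonneg)
    fix l :: 'n
    have "gg \<theta>t (\<rho> x $ k) (\<rho> x $ l) \<le> gg \<theta>t (\<rho> x $ M) (\<rho> x $ l)"
      by (rule gap_term[OF th_mono th_nonneg le_M le_M]) (use x0 in simp_all)
    then show "0 \<le> gg \<theta>t (\<rho> x $ M) (\<rho> x $ l) - gg \<theta>t (\<rho> x $ k) (\<rho> x $ l)" by simp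
  qed (use kpos in simp)
  finally show "0 \<le> F x M - F x k" .
qed

lemma FM_lower: assumes t: "0 \<le> t"
  shows "F t M \<ge> \<kappa> * (\<theta>t (\<rho> t $ k) * (\<rho> t $ M - \<rho> t $ k))"
proof -
  have "gg \<theta>t (\<rho> t $ M) (\<rho> t $ k) \<le> (\<Sum>l\<in>UNIV. gg \<theta>t (\<rho> t $ M) (\<rho> t $ l))"
    by (rule member_le_sum) (use gg_nonneg[OF th_nonneg le_M[OF t]] in auto)
  moreover have "gg \<theta>t (\<rho> t $ M) (\<rho> t $ k) = \<theta>t (\<rho> t $ k) * (\<rho> t $ M - \<rho> t $ k)"
    using le_M[OF t, of k] by (simp add: gg_def min_def)
  ultimately show ?thesis unfolding F_def using kpos by (simp add: mult_left_mono)
qed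

end

definition KK where "KK = \<kappa> * real CARD('n) * \<theta>t 1"

lemma KK_nonneg: "KK \<ge> 0" unfolding KK_def using kpos th_nonneg[of 1] by simp

lemma Fk_lower: assumes t: "0 \<le> t" shows "F t k \<ge> - KK"
proof -
  have tm: "gg \<theta>t (\<rho> t $ k) (\<rho> t $ l) \<ge> - \<theta>t 1" for l
  proof -
    have m1: "\<theta>t (min (\<rho> t $ k) (\<rho> t $ l)) \<le> \<theta>t 1"
      using le1[OF t, of k] th_mono by (intro monoD[OF th_mono]) simp
    have m0: "\<theta>t (min (\<rho> t $ k) (\<rho> t $ l)) \<ge> 0" by (rule th_nonneg)
    have d: "\<rho> t $ k - \<rho> t $ l \<ge> -1" using nonneg[OF t, of k] le1[OF t, of l] by simp
    have "\<theta>t (min (\<rho> t $ k) (\<rho> t $ l)) * (-1) \<le> \<theta>t (min (\<rho> t $ k) (\<rho> t $ l)) * (\<rho> t $ k - \<rho> t $ l)"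
      by (rule mult_left_mono[OF d m0])
    then show ?thesis unfolding gg_def using m1 by simp
  qed
  have "(\<Sum>l\<in>(UNIV::'n set). - \<theta>t 1) \<le> (\<Sum>l\<in>UNIV. gg \<theta>t (\<rho> t $ k) (\<rho> t $ l))"
    by (rule sum_mono) (rule tm)
  then have "- (real CARD('n) * \<theta>t 1) \<le> (\<Sum>l\<in>UNIV. gg \<theta>t (\<rho> t $ k) (\<rho> t $ l))" by simp
  then have "\<kappa> * (- (real CARD('n) * \<theta>t 1)) \<le> \<kappa> * (\<Sum>l\<in>UNIV. gg \<theta>t (\<rho> t $ k) (\<rho> t $ l))"
    using kpos by (intro mult_left_mono) simp_all
  then show ?thesis unfolding F_def KK_def by simp
qed

context
  fixes M :: 'n
  assumes Mmax: "\<And>l. \<rho> 0 $ l \<le> \<rho> 0 $ M"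
begin

lemma tend0:
  assumes lt: "\<rho> 0 $ k < \<rho> 0 $ M"
  shows "((\<lambda>t. \<rho> t $ k) \<longlongrightarrow> 0) at_top"
proof (rule tendstoI)
  fix e :: real assume e: "e > 0"
  define \<delta> where "\<delta> = \<rho> 0 $ M - \<rho> 0 $ k"
  have \<delta>: "\<delta> > 0" using lt by (simp add: \<delta>_def)
  have gap: "\<rho> t $ M - \<rho> t $ k \<ge> \<delta>" if "0 \<le> t" for t
    unfolding \<delta>_def by (rule gap_mono[OF Mmax]) (use that in simp_all)
  define h where "h = e / (2 * (KK + 1))"
  have h: "h > 0" unfolding h_def using e KK_nonneg by simp
  have Kh: "KK * h \<le> e / 2"
  proof -
    have "KK * h = (e/2) * (KK / (KK + 1))" unfolding h_def using KK_nonneg by (simp add: field_simps)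
    also have "\<dots> \<le> (e/2) * 1" using e KK_nonneg by (intro mult_left_mono) simp_all
    finally show ?thesis by simp
  qed
  define c where "c = \<kappa> * (\<theta>t (e/2) * \<delta>)"
  have c: "c > 0" unfolding c_def using kpos th_pos[of "e/2"] e \<delta> by simp
  define S where "S = (SUP t\<in>{0::real..}. \<rho> t $ M)"
  have bdd: "bdd_above ((\<lambda>t. \<rho> t $ M) ` {0..})"
    by (rule bdd_aboveI[where M=1]) (auto intro: le1)
  have "S - c * h < S" using c h by simp
  then obtain t0 where t0: "t0 \<in> {0..}" "S - c * h < \<rho> t0 $ M"
    unfolding S_def using less_cSUP_iff[OF _ bdd] by auto
  show "eventually (\<lambda>t. dist (\<rho> t $ k) 0 < e) at_top"
  proof (rule eventually_at_top_linorderI[of t0])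
    fix t assume tt0: "t0 \<le> t"
    have t: "0 \<le> t" using t0 tt0 by simp
    show "dist (\<rho> t $ k) 0 < e"
    proof (rule ccontr)
      assume "\<not> dist (\<rho> t $ k) 0 < e"
      then have big: "\<rho> t $ k \<ge> e" using nonneg[OF t, of k] by (simp add: dist_real_def)
      have low: "\<rho> s $ k \<ge> e / 2" if s: "t \<le> s" "s \<le> t + h" for s
      proof -
        have "\<rho> t $ k + KK * t \<le> \<rho> s $ k + KK * s"
        proof (rule incr[where f="\<lambda>x. \<rho> x $ k + KK * x" and f'="\<lambda>x. F x k + KK", OF s(1)])
          show "continuous_on {t..s} (\<lambda>x. \<rho> x $ k + KK * x)"
            by (intro continuous_on_add continuous_on_mult continuous_on_const continuous_on_id comp_cont_ab[OF t])
          fix x assume x: "t < x" "x < s"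
          then have x0: "0 < x" using t by simp
          show "((\<lambda>x. \<rho> x $ k + KK * x) has_real_derivative F x k + KK) (at x)"
            using DERIV_add[OF comp_deriv[OF x0] DERIV_cmult_Id[of KK x UNIV]] by simp
          show "0 \<le> F x k + KK" using Fk_lower[of x k] x0 by simp
        qed
        then have "\<rho> s $ k \<ge> \<rho> t $ k - KK * (s - t)" by (simp add: algebra_simps)
        moreover have "KK * (s - t) \<le> KK * h" using s KK_nonneg by (intro mult_left_mono) simp_all
        ultimately show ?thesis using big Kh by linarith
      qed
      have "\<rho> t $ M - c * t \<le> \<rho> (t + h) $ M - c * (t + h)"
      proof (rule incr[where f="\<lambda>x. \<rho> x $ M - c * x" and f'="\<lambda>x. F x M - c"])
        show "t \<le> t + h" using h by simp
        show "continuous_on {t..t+h} (\<lambda>x. \<rho> x $ M - c * x)"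
          by (intro continuous_on_diff continuous_on_mult continuous_on_const continuous_on_id comp_cont_ab[OF t])
        fix x assume x: "t < x" "x < t + h"
        then have x0: "0 < x" using t by simp
        show "((\<lambda>x. \<rho> x $ M - c * x) has_real_derivative F x M - c) (at x)"
          using DERIV_diff[OF comp_deriv[OF x0] DERIV_cmult_Id[of c x UNIV]] by simp
        have lx: "\<rho> x $ k \<ge> e / 2" using low x by simp
        have th: "\<theta>t (e/2) \<le> \<theta>t (\<rho> x $ k)" by (rule monoD[OF th_mono lx])
        have gx: "\<delta> \<le> \<rho> x $ M - \<rho> x $ k" using gap x0 by simp
        have "\<theta>t (e/2) * \<delta> \<le> \<theta>t (\<rho> x $ k) * (\<rho> x $ M - \<rho> x $ k)"
          by (rule mult_mono[OF th gx]) (use th_nonneg \<delta> in auto)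
        then have "c \<le> \<kappa> * (\<theta>t (\<rho> x $ k) * (\<rho> x $ M - \<rho> x $ k))"
          unfolding c_def using kpos by (intro mult_left_mono) simp_all
        also have "\<dots> \<le> F x M" using FM_lower[OF Mmax, of x k] x0 by simp
        finally show "0 \<le> F x M - c" by simp
      qed
      then have "\<rho> (t + h) $ M \<ge> \<rho> t $ M + c * h" by (simp add: algebra_simps)
      moreover have "\<rho> t0 $ M \<le> \<rho> t $ M" using M_mono[OF Mmax] t0 tt0 by simp
      moreover have "\<rho> (t + h) $ M \<le> S" unfolding S_def
        by (rule cSUP_upper[OF _ bdd]) (use t h in simp)
      ultimately show False using t0(2) by linarith
    qed
  qed
qed

end

lemma result:
  "let SM = {j. \<rho> 0 $ j = (MAX k\<in>UNIV. \<rho> 0 $ k)}; m = card SM in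
         (\<forall>j\<in>SM. ((\<lambda>t. \<rho> t $ j) \<longlongrightarrow> 1 / real m) at_top) \<and>
         (\<forall>k. k \<notin> SM \<longrightarrow> ((\<lambda>t. \<rho> t $ k) \<longlongrightarrow> 0) at_top)"
proof -
  define a where "a = (MAX k\<in>UNIV. \<rho> 0 $ k)"
  define SM where "SM = {j. \<rho> 0 $ j = a}"
  have "a \<in> (\<lambda>k. \<rho> 0 $ k) ` UNIV" unfolding a_def by (rule Max_in) simp_all
  then obtain M where M: "\<rho> 0 $ M = a" by auto
  have amax: "\<rho> 0 $ l \<le> a" for l unfolding a_def by (rule Max_ge) simp_all
  have Mmax: "\<And>l. \<rho> 0 $ l \<le> \<rho> 0 $ M" using amax M by simp
  have lim0: "((\<lambda>t. \<rho> t $ k) \<longlongrightarrow> 0) at_top" if "k \<notin> SM" for k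
  proof (rule tend0[OF Mmax])
    show "\<rho> 0 $ k < \<rho> 0 $ M" using that amax[of k] M unfolding SM_def by auto
  qed
  have MSM: "M \<in> SM" using M unfolding SM_def by simp
  define m where "m = card SM"
  have m: "real m > 0" unfolding m_def using MSM by (auto simp: card_gt_0_iff)
  have lim1: "((\<lambda>t. \<rho> t $ j) \<longlongrightarrow> 1 / real m) at_top" if j: "j \<in> SM" for j
  proof -
    have eq: "\<rho> t $ j = (1 - (\<Sum>k\<in>UNIV - SM. \<rho> t $ k)) / real m" if t: "0 \<le> t" for t
    proof -
      have same: "\<rho> t $ i = \<rho> t $ M" if "i \<in> SM" for i
        using pair_pres(2)[OF t, of i M] that M unfolding SM_def by simp
      have "1 = (\<Sum>i\<in>UNIV. \<rho> t $ i)" using sum1[OF t] by simp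
      also have "\<dots> = (\<Sum>i\<in>UNIV - SM. \<rho> t $ i) + (\<Sum>i\<in>SM. \<rho> t $ i)"
        by (rule sum.subset_diff) simp_all
      also have "(\<Sum>i\<in>SM. \<rho> t $ i) = (\<Sum>i\<in>SM. \<rho> t $ M)" by (rule sum.cong) (simp_all add: same)
      also have "\<dots> = real m * \<rho> t $ M" by (simp add: m_def)
      finally have "\<rho> t $ M = (1 - (\<Sum>k\<in>UNIV - SM. \<rho> t $ k)) / real m"
        using m by (simp add: field_simps)
      then show ?thesis using same[OF j] by simp
    qed
    have s0: "((\<lambda>t. \<Sum>k\<in>UNIV - SM. \<rho> t $ k) \<longlongrightarrow> (\<Sum>k\<in>UNIV - SM. (0::real))) at_top"
      by (rule tendsto_sum[of "UNIV - SM" "\<lambda>k t. \<rho> t $ k" "\<lambda>_. 0"]) (rule lim0, simp)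
    then have s1: "((\<lambda>t. 1 - (\<Sum>k\<in>UNIV - SM. \<rho> t $ k)) \<longlongrightarrow> 1 - 0) at_top"
      using tendsto_diff[OF tendsto_const[of "1::real"] s0] by simp
    have mn: "real m \<noteq> 0" using m by simp
    have "((\<lambda>t. (1 - (\<Sum>k\<in>UNIV - SM. \<rho> t $ k)) / real m) \<longlongrightarrow> (1 - 0) / real m) at_top"
      by (rule tendsto_divide[OF s1 tendsto_const mn])
    then have lim: "((\<lambda>t. (1 - (\<Sum>k\<in>UNIV - SM. \<rho> t $ k)) / real m) \<longlongrightarrow> 1 / real m) at_top" by simp
    have ev: "eventually (\<lambda>t. \<rho> t $ j = (1 - (\<Sum>k\<in>UNIV - SM. \<rho> t $ k)) / real m) at_top"
      by (rule eventually_at_top_linorderI[of 0]) (rule eq)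
    show ?thesis by (rule iffD2[OF tendsto_cong[OF ev] lim])
  qed
  show ?thesis unfolding Let_def a_def[symmetric] SM_def[symmetric] m_def[symmetric]
    using lim0 lim1 by blast
qed

end

theorem theorem3p1:
  fixes \<kappa> :: real
    and \<theta>t :: "real \<Rightarrow> real"
    and \<rho> :: "real \<Rightarrow> real ^ 'n"
  assumes n2: "CARD('n) \<ge> 2"
    and kpos: "\<kappa> > 0"
    and th_nonneg: "\<And>s. \<theta>t s \<ge> 0"
    and th_lip: "locally_lipschitz_real \<theta>t"
    and th_mono: "mono \<theta>t"
    and th_zero: "\<And>s. s \<le> 0 \<Longrightarrow> \<theta>t s = 0"
    and th_pos: "\<And>s. s > 0 \<Longrightarrow> \<theta>t s > 0"
    and ode: "\<And>t. t \<ge> 0 \<Longrightarrow>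
       (\<rho> has_vector_derivative
          (\<chi> j. \<kappa> * (\<Sum>k\<in>UNIV. \<theta>t (min (\<rho> t $ j) (\<rho> t $ k)) * (\<rho> t $ j - \<rho> t $ k))))
       (at t within {0..})"
    and init: "\<rho> 0 \<in> prob_simplex"
  shows "let SM = {j. \<rho> 0 $ j = (MAX k\<in>UNIV. \<rho> 0 $ k)}; m = card SM in
         (\<forall>j\<in>SM. ((\<lambda>t. \<rho> t $ j) \<longlongrightarrow> 1 / real m) at_top) \<and>
         (\<forall>k. k \<notin> SM \<longrightarrow> ((\<lambda>t. \<rho> t $ k) \<longlongrightarrow> 0) at_top)"
proof -
  interpret sys \<kappa> \<theta>t \<rho>
    by (rule sys.intro[OF kpos th_nonneg th_lip th_mono th_zero th_pos ode init])
  show ?thesis by (rule result)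
qed

end
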